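(* Let $\sigma\subseteq N_\mathbb{Q}$ be a pointed cone, let $\partial_{e,p}$ ($e\in M$, $p\in N$) be a non-zero homogeneous vector field on $X_\sigma$, and let $\tau\subseteq\sigma$ be a face. Then $\partial_{e,p}$ vanishes on the orbit closure $\overline{\mathcal{O}(\tau)}$ (i.e. $\partial_{e,p}(\mathbb{C}[\sigma^\vee_M])\subseteq I(\tau)$) if and only if: if $\partial_{e,p}$ is of type I: $p\in\mathrm{span}\,\tau$ or $\langle e,\rho\rangle>0$ for some $\rho\in\tau(1)$; if $\partial_{e,p}$ is of type II: $\langle e,\rho\rangle>0$ for some $\rho\in\tau(1)$.
   Context: $N$ is a lattice with dual $M$, pairing $\langle m,p\rangle$. $\sigma\subseteq N_\mathbb{Q}$ is a strongly convex rational polyhedral cone, $\sigma^\vee_M=\sigma^\vee\cap M$, $X_\sigma=\mathrm{Spec}\,\mathbb{C}[\sigma^\vee_M]$; for a face $\tau$, $\tau(1)$ is the set of primitive ray generators of $\tau$, $\mathcal{O}(\tau)$ is the corresponding torus orbit, and the ideal of its closure is $I(\tau)=\bigoplus_{m\in\sigma^\vee_M\setminus\tau^\perp}\mathbb{C}\chi^m$. $\partial_{e,p}$ is the derivation $\chi^m\mapsto\langle m,p\rangle\chi^{m+e}$; a homogeneous vector field on $X_\sigma$ is such a $\partial_{e,p}$ preserving $\mathbb{C}[\sigma^\vee_M]$, and (for $p\ne0$) this happens exactly when it is of Type I ($e\in\sigma^\vee_M$) or Type II (there is a ray $\rho_e\in\sigma(1)$ with $p\in\mathbb{Z}\rho_e$,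 $\langle e,\rho_e\rangle=-1$, $\langle e,\rho\rangle\ge0$ for all other $\rho\in\sigma(1)$). *)

theory Defs
  imports "HOL-Analysis.Analysis"
begin

text \<open>Lattice N = int^'n, dual lattice M = int^'n, N_Q = rat^'n.\<close>

definition qvec :: "int ^ 'n \<Rightarrow> rat ^ 'n" where
  "qvec v = (\<chi> i. of_int (v $ i))"

definition pair :: "int ^ 'n \<Rightarrow> int ^ 'n \<Rightarrow> int" where
  "pair m v = (\<Sum>i\<in>UNIV. m $ i * v $ i)"

definition qpair :: "rat ^ 'n \<Rightarrow> rat ^ 'n \<Rightarrow> rat" where
  "qpair u x = (\<Sum>i\<in>UNIV. u $ i * x $ i)"

definition qscale :: "rat \<Rightarrow> rat ^ 'n \<Rightarrow> rat ^ 'n" where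
  "qscale c x = (\<chi> i. c * x $ i)"

definition iscale :: "int \<Rightarrow> int ^ 'n \<Rightarrow> int ^ 'n" where
  "iscale c x = (\<chi> i. c * x $ i)"

definition cone_gen :: "(rat ^ 'n) set \<Rightarrow> (rat ^ 'n) set" where
  "cone_gen S = {x. \<exists>c. (\<forall>v\<in>S. c v \<ge> 0) \<and> x = (\<Sum>v\<in>S. qscale (c v) v)}"

definition rat_poly_cone :: "(rat ^ 'n) set \<Rightarrow> bool" where
  "rat_poly_cone \<sigma> \<longleftrightarrow> (\<exists>S. finite S \<and> \<sigma> = cone_gen (qvec ` S))"

definition strongly_convex :: "(rat ^ 'n) set \<Rightarrow> bool" where
  "strongly_convex \<sigma> \<longleftrightarrow> (\<forall>x. x \<in> \<sigma> \<and> - x \<in> \<sigma> \<longrightarrow> x = 0)"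

definition dual_cone :: "(rat ^ 'n) set \<Rightarrow> (rat ^ 'n) set" where
  "dual_cone \<sigma> = {u. \<forall>x\<in>\<sigma>. qpair u x \<ge> 0}"

definition dualM :: "(rat ^ 'n) set \<Rightarrow> (int ^ 'n) set" where
  "dualM \<sigma> = {m. qvec m \<in> dual_cone \<sigma>}"

definition perpM :: "(rat ^ 'n) set \<Rightarrow> (int ^ 'n) set" where
  "perpM \<tau> = {m. \<forall>x\<in>\<tau>. qpair (qvec m) x = 0}"

definition is_face :: "(rat ^ 'n) set \<Rightarrow> (rat ^ 'n) set \<Rightarrow> bool" where
  "is_face \<tau> \<sigma> \<longleftrightarrow> (\<exists>u\<in>dual_cone \<sigma>. \<tau> = {x\<in>\<sigma>. qpair u x = 0})"

definition primitive :: "int ^ 'n \<Rightarrow> bool" where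
  "primitive v \<longleftrightarrow> v \<noteq> 0 \<and> (\<forall>k w. v = iscale k w \<longrightarrow> \<bar>k\<bar> = 1)"

definition rays :: "(rat ^ 'n) set \<Rightarrow> (int ^ 'n) set" where
  "rays C = {\<rho>. primitive \<rho> \<and> is_face (cone_gen {qvec \<rho>}) C}"

definition qspan :: "(rat ^ 'n) set \<Rightarrow> (rat ^ 'n) set" where
  "qspan A = {x. \<exists>S c. finite S \<and> S \<subseteq> A \<and> x = (\<Sum>v\<in>S. qscale (c v) v)}"

text \<open>The semigroup algebra C[sigma-dual_M], as finitely supported coefficient
  functions M -> C supported in sigma-dual_M (f m is the coefficient of chi^m).\<close>
definition alg :: "(rat ^ 'n) set \<Rightarrow> ((int ^ 'n) \<Rightarrow> complex) set" where
  "alg \<sigma> = {f. finite {m. f m \<noteq> 0} \<and> (\<forall>m. f m \<noteq> 0 \<longrightarrow> m \<in> dualM \<sigma>)}"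

text \<open>Ideal I(tau) = span of chi^m, m in sigma-dual_M minus tau-perp.\<close>
definition orbit_ideal :: "(rat ^ 'n) set \<Rightarrow> (rat ^ 'n) set \<Rightarrow> ((int ^ 'n) \<Rightarrow> complex) set" where
  "orbit_ideal \<sigma> \<tau> = {f. finite {m. f m \<noteq> 0} \<and>
      (\<forall>m. f m \<noteq> 0 \<longrightarrow> m \<in> dualM \<sigma> - perpM \<tau>)}"

text \<open>The derivation partial_{e,p}: chi^m maps to <m,p> chi^(m+e), extended linearly.\<close>
definition der :: "int ^ 'n \<Rightarrow> int ^ 'n \<Rightarrow> (int ^ 'n \<Rightarrow> complex) \<Rightarrow> (int ^ 'n \<Rightarrow> complex)" where
  "der e p f = (\<lambda>m. of_int (pair (m - e) p) * f (m - e))"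

definition homogeneous_vf :: "(rat ^ 'n) set \<Rightarrow> int ^ 'n \<Rightarrow> int ^ 'n \<Rightarrow> bool" where
  "homogeneous_vf \<sigma> e p \<longleftrightarrow> der e p ` alg \<sigma> \<subseteq> alg \<sigma>"

definition typeI :: "(rat ^ 'n) set \<Rightarrow> int ^ 'n \<Rightarrow> bool" where
  "typeI \<sigma> e \<longleftrightarrow> e \<in> dualM \<sigma>"

definition typeII :: "(rat ^ 'n) set \<Rightarrow> int ^ 'n \<Rightarrow> int ^ 'n \<Rightarrow> bool" where
  "typeII \<sigma> e p \<longleftrightarrow> (\<exists>\<rho>e\<in>rays \<sigma>. (\<exists>k. p = iscale k \<rho>e) \<and> pair e \<rho>e = -1 \<and>
      (\<forall>\<rho>\<in>rays \<sigma> - {\<rho>e}. pair e \<rho> \<ge> 0))"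

definition vanishes_on_orbit_closure :: "(rat ^ 'n) set \<Rightarrow> (rat ^ 'n) set \<Rightarrow> int ^ 'n \<Rightarrow> int ^ 'n \<Rightarrow> bool" where
  "vanishes_on_orbit_closure \<sigma> \<tau> e p \<longleftrightarrow> der e p ` alg \<sigma> \<subseteq> orbit_ideal \<sigma> \<tau>"

end

theory Submission
  imports Defs
begin

lemma qpair_add_right[simp]: "qpair u (x + y) = qpair u x + qpair u y"
  by (simp add: qpair_def distrib_left sum.distrib)
lemma qpair_add_left[simp]: "qpair (u + v) x = qpair u x + qpair v x"
  by (simp add: qpair_def distrib_right sum.distrib)
lemma qpair_diff_right[simp]: "qpair u (x - y) = qpair u x - qpair u y"
  by (simp add: qpair_def right_diff_distrib sum_subtractf)
lemma qpair_diff_left[simp]: "qpair (u - v) x = qpair u x - qpair v x"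
  by (simp add: qpair_def left_diff_distrib sum_subtractf)
lemma qpair_neg_right[simp]: "qpair u (- x) = - qpair u x"
  by (simp add: qpair_def sum_negf)
lemma qpair_neg_left[simp]: "qpair (- u) x = - qpair u x"
  by (simp add: qpair_def sum_negf)
lemma qpair_zero_right[simp]: "qpair u 0 = 0"
  by (simp add: qpair_def)
lemma qpair_zero_left[simp]: "qpair 0 x = 0"
  by (simp add: qpair_def)
lemma qpair_scale_right[simp]: "qpair u (qscale c x) = c * qpair u x"
  by (simp add: qpair_def qscale_def sum_distrib_left algebra_simps)
lemma qpair_scale_left[simp]: "qpair (qscale c u) x = c * qpair u x"
  by (simp add: qpair_def qscale_def sum_distrib_left algebra_simps)
lemma qpair_sum_right: "qpair u (sum f F) = (\<Sum>v\<in>F. qpair u (f v))"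
  by (simp add: qpair_def sum_distrib_left sum.swap[of _ F])
lemma qpair_sum_left: "qpair (sum f F) x = (\<Sum>v\<in>F. qpair (f v) x)"
  by (simp add: qpair_def sum_distrib_right sum.swap[of _ F])
lemma qpair_self_pos: "x \<noteq> 0 \<Longrightarrow> qpair x x > 0"
proof -
  assume "x \<noteq> 0"
  then obtain i where i: "x $ i \<noteq> 0" by (auto simp: vec_eq_iff)
  have "x $ i * x $ i \<le> qpair x x" unfolding qpair_def
    by (rule member_le_sum) auto
  moreover have "x $ i * x $ i > 0" using i by (cases "x $ i > 0") (auto simp: mult_neg_neg)
  ultimately show ?thesis by simp
qed

lemma qscale_0[simp]: "qscale 0 x = 0" by (simp add: qscale_def vec_eq_iff)
lemma qscale_1[simp]: "qscale 1 x = x" by (simp add: qscale_def vec_eq_iff)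
lemma qscale_zero[simp]: "qscale c 0 = 0" by (simp add: qscale_def vec_eq_iff)
lemma qscale_comp[simp]: "qscale a (qscale b x) = qscale (a * b) x"
  by (simp add: qscale_def vec_eq_iff)
lemma qscale_add_right: "qscale c (x + y) = qscale c x + qscale c y"
  by (simp add: qscale_def vec_eq_iff algebra_simps)
lemma qscale_add_left: "qscale (a + b) x = qscale a x + qscale b x"
  by (simp add: qscale_def vec_eq_iff algebra_simps)
lemma qscale_component[simp]: "qscale c x $ i = c * x $ i"
  by (simp add: qscale_def)
lemma qscale_eq_0: "qscale c x = 0 \<longleftrightarrow> c = 0 \<or> x = 0"
  by (auto simp: qscale_def vec_eq_iff)

lemma qvec_component[simp]: "qvec v $ i = of_int (v $ i)" by (simp add: qvec_def)
lemma qvec_add[simp]: "qvec (a + b) = qvec a + qvec b" by (simp add: vec_eq_iff)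
lemma qvec_diff[simp]: "qvec (a - b) = qvec a - qvec b" by (simp add: vec_eq_iff)
lemma qvec_neg[simp]: "qvec (- a) = - qvec a" by (simp add: vec_eq_iff)
lemma qvec_zero[simp]: "qvec 0 = 0" by (simp add: vec_eq_iff)
lemma qvec_iscale[simp]: "qvec (iscale k v) = qscale (of_int k) (qvec v)"
  by (simp add: vec_eq_iff iscale_def)
lemma qvec_eq_iff[simp]: "qvec a = qvec b \<longleftrightarrow> a = b" by (simp add: vec_eq_iff)
lemma qvec_eq_0[simp]: "qvec a = 0 \<longleftrightarrow> a = 0"
  using qvec_eq_iff[of a 0] by simp
lemma qpair_qvec[simp]: "qpair (qvec m) (qvec v) = of_int (pair m v)"
  by (simp add: qpair_def pair_def)
lemma pair_add_left: "pair (a + b) v = pair a v + pair b v"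
  by (simp add: pair_def distrib_right sum.distrib)
lemma pair_diff_left: "pair (a - b) v = pair a v - pair b v"
  by (simp add: pair_def left_diff_distrib sum_subtractf)
lemma pair_iscale_right: "pair m (iscale k v) = k * pair m v"
  by (simp add: pair_def iscale_def sum_distrib_left algebra_simps)
lemma pair_iscale_left: "pair (iscale k m) v = k * pair m v"
  by (simp add: pair_def iscale_def sum_distrib_left algebra_simps)

inductive_set cg :: "(rat ^ 'n) set \<Rightarrow> (rat ^ 'n) set" for S :: "(rat ^ 'n) set" where
  cg0: "0 \<in> cg S"
| cgstep: "x \<in> cg S \<Longrightarrow> v \<in> S \<Longrightarrow> c \<ge> 0 \<Longrightarrow> x + qscale c v \<in> cg S"

lemma cg_gen: "v \<in> S \<Longrightarrow> v \<in> cg S"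
  using cgstep[OF cg0, of v S 1] by simp

lemma cg_add: assumes "x \<in> cg S" shows "y \<in> cg S \<Longrightarrow> x + y \<in> cg S"
proof (induction y rule: cg.induct)
  case cg0 then show ?case using assms by simp
next
  case (cgstep y v c) then show ?case using assms cg.cgstep[of "x + y" S v c] by (simp add: add.assoc)
qed

lemma cg_scale: "x \<in> cg S \<Longrightarrow> c \<ge> 0 \<Longrightarrow> qscale c x \<in> cg S"
proof (induction x rule: cg.induct)
  case cg0 then show ?case by (simp add: cg.cg0)
next
  case (cgstep y v d) then show ?case using cg.cgstep[of "qscale c y" S v "c*d"]
    by (simp add: qscale_add_right)
qed

lemma cg_mono: "S \<subseteq> T \<Longrightarrow> cg S \<subseteq> cg T"
proof
  fix x assume st: "S \<subseteq> T" and "x \<in> cg S" from this(2) show "x \<in> cg T"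
  proof (induction x rule: cg.induct)
    case cg0 show ?case by (rule cg.cg0)
  next
    case (cgstep x v c) then show ?case using st by (blast intro: cg.cgstep)
  qed
qed

lemma cg_insert: "x \<in> cg (insert g G) \<Longrightarrow> \<exists>y t. y \<in> cg G \<and> t \<ge> 0 \<and> x = y + qscale t g"
proof (induction x rule: cg.induct)
  case cg0 then show ?case by (auto intro!: exI[of _ 0] cg.cg0)
next
  case (cgstep x v c)
  then obtain y t where y: "y \<in> cg G" "t \<ge> 0" "x = y + qscale t g" by blast
  show ?case
  proof (cases "v = g")
    case True then show ?thesis using y cgstep
      by (intro exI[of _ y] exI[of _ "t + c"]) (simp add: qscale_add_left add.assoc)
  next
    case False then show ?thesis using y cgstep
      by (intro exI[of _ "y + qscale c v"] exI[of _ t]) (auto intro: cg.cgstep simp: algebra_simps)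
  qed
qed

lemma cg_insertI: "y \<in> cg G \<Longrightarrow> t \<ge> 0 \<Longrightarrow> y + qscale t g \<in> cg (insert g G)"
proof -
  assume y: "y \<in> cg G" and t: "t \<ge> 0"
  have "cg G \<subseteq> cg (insert g G)" by (rule cg_mono) (rule subset_insertI)
  then have y': "y \<in> cg (insert g G)" using y by blast
  show ?thesis by (rule cg.cgstep[OF y' insertI1 t])
qed

lemma cg_dual: assumes "\<forall>v\<in>S. qpair w v \<ge> 0" shows "x \<in> cg S \<Longrightarrow> qpair w x \<ge> 0"
proof (induction x rule: cg.induct)
  case cg0 then show ?case by simp
next
  case (cgstep x v c)
  have "qpair w v \<ge> 0" using assms cgstep(2) by blast
  then have "c * qpair w v \<ge> 0" using cgstep(3) by simp
  then show ?case using cgstep(4) by simp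
qed

lemma cg_perp: assumes "\<forall>v\<in>S. qpair w v = 0" shows "x \<in> cg S \<Longrightarrow> qpair w x = 0"
proof (induction x rule: cg.induct)
  case cg0 then show ?case by simp
next
  case (cgstep x v c)
  have "qpair w v = 0" using assms cgstep(2) by blast
  then show ?case using cgstep(4) by simp
qed

lemma cg_face:
  assumes "\<forall>v\<in>S. qpair w v \<ge> 0"
  shows "{x\<in>cg S. qpair w x = 0} = cg {v\<in>S. qpair w v = 0}"
proof
  have m: "cg {v\<in>S. qpair w v = 0} \<subseteq> cg S" by (rule cg_mono) blast
  have p: "\<forall>v\<in>{v\<in>S. qpair w v = 0}. qpair w v = 0" by blast
  show "cg {v\<in>S. qpair w v = 0} \<subseteq> {x\<in>cg S. qpair w x = 0}"
  proof
    fix x assume x: "x \<in> cg {v\<in>S. qpair w v = 0}"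
    have "qpair w x = 0" by (rule cg_perp[OF p x])
    then show "x \<in> {x\<in>cg S. qpair w x = 0}" using m x by blast
  qed
  have "x \<in> cg S \<Longrightarrow> qpair w x = 0 \<Longrightarrow> x \<in> cg {v\<in>S. qpair w v = 0}" for x
  proof (induction x rule: cg.induct)
    case cg0 show ?case by (rule cg.cg0)
  next
    case (cgstep x v c)
    have a: "qpair w x \<ge> 0" using cg_dual[OF assms cgstep(1)] .
    have wv: "qpair w v \<ge> 0" using assms cgstep(2) by blast
    have b: "c * qpair w v \<ge> 0" using wv cgstep(3) by simp
    have sum0: "qpair w x + c * qpair w v = 0" using cgstep(5) by simp
    have x0: "qpair w x = 0" using a b sum0 by linarith
    have c0: "c * qpair w v = 0" using a b sum0 by linarith
    have IH: "x \<in> cg {v\<in>S. qpair w v = 0}" using cgstep(4) x0 by blast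
    show ?case
    proof (cases "c = 0")
      case True then show ?thesis using IH by simp
    next
      case False
      then have "qpair w v = 0" using c0 by simp
      then have "v \<in> {v\<in>S. qpair w v = 0}" using cgstep(2) by blast
      then show ?thesis by (rule cg.cgstep[OF IH _ cgstep(3)])
    qed
  qed
  then show "{x\<in>cg S. qpair w x = 0} \<subseteq> cg {v\<in>S. qpair w v = 0}" by blast
qed

lemma cg_map:
  assumes lin: "\<And>x c v. f (x + qscale c v) = f x + qscale c (f v)" and f0: "f 0 = 0"
  shows "y \<in> cg (f ` S) \<Longrightarrow> \<exists>z\<in>cg S. y = f z"
proof (induction y rule: cg.induct)
  case cg0 show ?case using f0 cg.cg0 by metis
next
  case (cgstep y v c)
  obtain z where z: "z \<in> cg S" "y = f z" using cgstep(4) by blast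
  obtain a where a: "a \<in> S" "v = f a" using cgstep(2) by blast
  have "z + qscale c a \<in> cg S" using z(1) a(1) cgstep(3) by (rule cg.cgstep)
  moreover have "y + qscale c v = f (z + qscale c a)" using z(2) a(2) lin by simp
  ultimately show ?case by blast
qed

lemma cg_empty: "cg {} = {0}"
proof -
  have "x \<in> cg {} \<Longrightarrow> x = 0" for x
  proof (induction x rule: cg.induct)
    case cg0 show ?case by simp
  next
    case (cgstep x v c) then show ?case by simp
  qed
  then show ?thesis using cg.cg0 by blast
qed

lemma cg_absorb: "g \<in> cg H \<Longrightarrow> cg (insert g H) = cg H"
proof
  assume g: "g \<in> cg H"
  show "cg (insert g H) \<subseteq> cg H"
  proof
    fix x assume "x \<in> cg (insert g H)" then show "x \<in> cg H"
    proof (induction x rule: cg.induct)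
      case cg0 show ?case by (rule cg.cg0)
    next
      case (cgstep x v c)
      show ?case
      proof (cases "v = g")
        case True then show ?thesis using cg_add[OF cgstep(4) cg_scale[OF g cgstep(3)]] by simp
      next
        case False then have "v \<in> H" using cgstep(2) by blast
        then show ?thesis by (rule cg.cgstep[OF cgstep(4) _ cgstep(3)])
      qed
    qed
  qed
  show "cg H \<subseteq> cg (insert g H)" by (rule cg_mono) (rule subset_insertI)
qed

lemma cg_single: "cg {v} = {qscale c v | c. c \<ge> 0}"
proof
  show "cg {v} \<subseteq> {qscale c v | c. c \<ge> 0}"
  proof
    fix x assume "x \<in> cg {v}" then show "x \<in> {qscale c v | c. c \<ge> 0}"
    proof (induction x rule: cg.induct)
      case cg0 then show ?case by (auto intro!: exI[of _ 0])
    next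
      case (cgstep x w c)
      then obtain d where "d \<ge> 0" "x = qscale d v" by auto
      then show ?case using cgstep by (auto intro!: exI[of _ "d + c"] simp: qscale_add_left)
    qed
  qed
  show "{qscale c v | c. c \<ge> 0} \<subseteq> cg {v}" using cg_scale[OF cg_gen[of v "{v}"]] by auto
qed

lemma sum_upd:
  assumes "finite F" "a \<in> F"
  shows "(\<Sum>v\<in>F. qscale ((k(a := k a + c)) v) v) = (\<Sum>v\<in>F. qscale (k v) v) + qscale c a"
proof -
  have "(\<Sum>v\<in>F. qscale ((k(a := k a + c)) v) v)
      = qscale (k a + c) a + (\<Sum>v\<in>F-{a}. qscale ((k(a := k a + c)) v) v)"
    using assms by (simp add: sum.remove)
  also have "(\<Sum>v\<in>F-{a}. qscale ((k(a := k a + c)) v) v) = (\<Sum>v\<in>F-{a}. qscale (k v) v)"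
    by (rule sum.cong) auto
  also have "qscale (k a + c) a + (\<Sum>v\<in>F-{a}. qscale (k v) v)
     = (qscale (k a) a + (\<Sum>v\<in>F-{a}. qscale (k v) v)) + qscale c a"
    by (simp add: qscale_add_left algebra_simps)
  also have "qscale (k a) a + (\<Sum>v\<in>F-{a}. qscale (k v) v) = (\<Sum>v\<in>F. qscale (k v) v)"
    using assms by (simp add: sum.remove)
  finally show ?thesis .
qed

lemma cone_gen_cg: "finite S \<Longrightarrow> cone_gen S = cg S"
proof
  assume fin: "finite S"
  show "cone_gen S \<subseteq> cg S"
  proof
    fix x assume "x \<in> cone_gen S"
    then obtain c where c: "\<forall>v\<in>S. c v \<ge> 0" "x = (\<Sum>v\<in>S. qscale (c v) v)"
      unfolding cone_gen_def by auto
    have "T \<subseteq> S \<Longrightarrow> (\<Sum>v\<in>T. qscale (c v) v) \<in> cg S" for T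
    proof (induction T rule: infinite_finite_induct)
      case (infinite A) then show ?case by (simp add: cg.cg0)
    next
      case empty then show ?case by (simp add: cg.cg0)
    next
      case (insert a A)
      then have "(\<Sum>v\<in>A. qscale (c v) v) + qscale (c a) a \<in> cg S"
        using c by (intro cg.cgstep) auto
      then show ?case using insert by (simp add: add.commute)
    qed
    then show "x \<in> cg S" using c by simp
  qed
  show "cg S \<subseteq> cone_gen S"
  proof
    fix x assume "x \<in> cg S" then show "x \<in> cone_gen S"
    proof (induction x rule: cg.induct)
      case cg0 then show ?case unfolding cone_gen_def by (auto intro!: exI[of _ "\<lambda>_. 0"])
    next
      case (cgstep x v c)
      then obtain k where k: "\<forall>v\<in>S. k v \<ge> 0" "x = (\<Sum>v\<in>S. qscale (k v) v)"
        unfolding cone_gen_def by auto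
      show ?case unfolding cone_gen_def
        using k cgstep fin sum_upd[OF fin cgstep(2), of k c]
        by (auto intro!: exI[of _ "k(v := k v + c)"])
    qed
  qed
qed

lemma farkas:
  fixes G :: "(rat ^ 'n) set"
  shows "finite G \<Longrightarrow> x \<notin> cg G \<Longrightarrow> \<exists>w. (\<forall>g\<in>G. qpair w g \<ge> 0) \<and> qpair w x < 0"
proof (induction "card G" arbitrary: G x rule: less_induct)
  case less
  show ?case
  proof (cases "G = {}")
    case True
    then have "x \<noteq> 0" using less(3) by (auto simp: cg_empty)
    then show ?thesis using True qpair_self_pos[of x] by (intro exI[of _ "-x"]) auto
  next
    case False
    then obtain h where h: "h \<in> G" by auto
    define G0 where "G0 = G - {h}"
    have G: "G = insert h G0" using h G0_def by auto
    have fin0: "finite G0" using less(2) G0_def by auto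
    have card0: "card G0 < card G" using less(2) h unfolding G0_def by (rule card_Diff1_less)
    have "x \<notin> cg G0" using less(3) cg_mono[of G0 G] G by auto
    then obtain u0 where u0: "\<forall>g\<in>G0. qpair u0 g \<ge> 0" "qpair u0 x < 0"
      using less(1)[OF card0 fin0] by blast
    show ?thesis
    proof (cases "qpair u0 h \<ge> 0")
      case True then show ?thesis using u0 G by (intro exI[of _ u0]) auto
    next
      case False
      define a where "a = qpair u0 h"
      have a: "a < 0" using False a_def by simp
      define f where "f v = qscale a v - qscale (qpair u0 v) h" for v
      have flin: "f (y + qscale c v) = f y + qscale c (f v)" for y c v
        by (simp add: f_def vec_eq_iff algebra_simps)
      have f0: "f 0 = 0" by (simp add: f_def)
      have finf: "finite (f ` G0)" using fin0 by simp
      have cardf: "card (f ` G0) < card G" using card0 card_image_le[OF fin0, of f] by simp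
      have fx: "f x \<notin> cg (f ` G0)"
      proof
        assume "f x \<in> cg (f ` G0)"
        then obtain z where z: "z \<in> cg G0" "f x = f z" using cg_map[of f, OF flin f0] by blast
        have uz: "qpair u0 z \<ge> 0" using cg_dual[OF u0(1) z(1)] .
        define t where "t = (qpair u0 x - qpair u0 z) / a"
        have t: "t \<ge> 0" unfolding t_def using a uz u0(2)
          by (simp add: divide_nonpos_neg)
        have "x = z + qscale t h"
        proof -
          have "\<forall>i. a * x $ i - qpair u0 x * h $ i = a * z $ i - qpair u0 z * h $ i"
            using z(2) by (simp add: f_def vec_eq_iff)
          then show ?thesis using a unfolding t_def
            by (simp add: vec_eq_iff field_simps)
        qed
        then have "x \<in> cg G" using cg_insertI[OF z(1) t, of h] G by simp
        then show False using less(3) by simp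
      qed
      have "\<exists>w. (\<forall>g\<in>f ` G0. qpair w g \<ge> 0) \<and> qpair w (f x) < 0"
        by (rule less(1)[OF cardf finf fx])
      then obtain u1 where u1: "\<forall>g\<in>f ` G0. qpair u1 g \<ge> 0" "qpair u1 (f x) < 0"
        by blast
      define w where "w = qscale a u1 - qscale (qpair u1 h) u0"
      have wf: "qpair w v = qpair u1 (f v)" for v
        by (simp add: w_def f_def algebra_simps)
      have fh: "f h = 0" by (simp add: f_def a_def)
      have "\<forall>g\<in>G. qpair w g \<ge> 0"
      proof
        fix g assume "g \<in> G"
        then have "g = h \<or> g \<in> G0" using G by blast
        then show "qpair w g \<ge> 0"
        proof
          assume "g = h" then show ?thesis by (simp add: wf fh)
        next
          assume "g \<in> G0"
          then have "f g \<in> f ` G0" by (rule imageI)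
          then have "qpair u1 (f g) \<ge> 0" using u1(1) by blast
          then show ?thesis by (simp add: wf)
        qed
      qed
      moreover have "qpair w x < 0" using u1(2) by (simp add: wf)
      ultimately show ?thesis by blast
    qed
  qed
qed

lemma prim_exists:
  fixes t :: "int ^ 'n"
  assumes "t \<noteq> 0"
  shows "\<exists>\<rho> d. primitive \<rho> \<and> d > 0 \<and> t = iscale d \<rho>"
proof -
  define d where "d = Gcd (range (\<lambda>i. t $ i))"
  have dvd: "d dvd t $ i" for i unfolding d_def by (rule Gcd_dvd) auto
  have "d \<noteq> 0" using assms unfolding d_def by (auto simp: vec_eq_iff)
  moreover have "d \<ge> 0" unfolding d_def by simp
  ultimately have dpos: "d > 0" by simp
  define \<rho> where "\<rho> = (\<chi> i. t $ i div d)"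
  have teq: "t = iscale d \<rho>" using dvd by (simp add: \<rho>_def iscale_def vec_eq_iff)
  have "primitive \<rho>" unfolding primitive_def
  proof (intro conjI allI impI)
    show "\<rho> \<noteq> 0" using teq assms by (auto simp: iscale_def vec_eq_iff)
  next
    fix k w assume kw: "\<rho> = iscale k w"
    have "k * d dvd t $ i" for i using teq kw by (simp add: iscale_def)
    then have "k * d dvd d" unfolding d_def by (intro Gcd_greatest) auto
    then have "k dvd 1" using dpos by (metis dvd_mult_cancel_right mult_1 mult.commute less_irrefl)
    then show "\<bar>k\<bar> = 1" by simp
  qed
  then show ?thesis using dpos teq by blast
qed

lemma denom_exists:
  fixes u :: "rat ^ 'n"
  shows "\<exists>d U. d > 0 \<and> qvec U = qscale (of_int d) u"
proof -
  define den where "den i = snd (quotient_of (u $ i))" for i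
  define num where "num i = fst (quotient_of (u $ i))" for i
  have denpos: "den i > 0" for i unfolding den_def by (rule quotient_of_denom_pos')
  have ueq: "u $ i = of_int (num i) / of_int (den i)" for i
    unfolding num_def den_def by (rule quotient_of_div) simp
  define d where "d = (\<Prod>i\<in>UNIV. den i)"
  have dpos: "d > 0" unfolding d_def using denpos by (simp add: prod_pos)
  have ddvd: "den i dvd d" for i unfolding d_def by (rule dvd_prodI) auto
  define U where "U = (\<chi> i. num i * (d div den i))"
  have "qvec U = qscale (of_int d) u"
  proof (simp add: vec_eq_iff U_def, intro allI)
    fix i
    have "d = den i * (d div den i)" using ddvd[of i] by simp
    then have "(of_int d :: rat) = of_int (den i) * of_int (d div den i)"
      by (metis of_int_mult)
    then show "of_int (num i) * of_int (d div den i) = (of_int d :: rat) * u $ i"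
      using denpos[of i] by (simp add: ueq field_simps)
  qed
  then show ?thesis using dpos by blast
qed

lemma rays_in: "\<rho> \<in> rays C \<Longrightarrow> qvec \<rho> \<in> C"
proof -
  assume "\<rho> \<in> rays C"
  then obtain w where w: "cone_gen {qvec \<rho>} = {x\<in>C. qpair w x = 0}"
    unfolding rays_def is_face_def by auto
  have "qvec \<rho> \<in> cone_gen {qvec \<rho>}" by (simp add: cone_gen_cg cg_gen)
  then show ?thesis using w by auto
qed

lemma cg_eq_cone_gen_single: "cone_gen {v} = cg {v}" by (simp add: cone_gen_cg)

lemma rays_bound:
  fixes T :: "(int ^ 'n) set"
  assumes finT: "finite T" and C: "C = cg (qvec ` T)" and sc: "strongly_convex C"
    and f: "\<forall>\<rho>\<in>rays C. qpair f (qvec \<rho>) \<le> 0"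
  shows "\<forall>x\<in>C. qpair f x \<le> 0"
proof -
  define \<G> where "\<G> = {G. G \<subseteq> qvec ` T \<and> cg G = C}"
  have ne: "qvec ` T \<in> \<G>" using C \<G>_def by auto
  obtain G where G: "G \<in> \<G>" and Gmin: "\<And>G'. G' \<in> \<G> \<Longrightarrow> card G \<le> card G'"
    using ex_has_least_nat[of "\<lambda>G. G \<in> \<G>" "qvec ` T" card] ne by blast
  have GT: "G \<subseteq> qvec ` T" and CG: "cg G = C" using G \<G>_def by auto
  have finG: "finite G" using GT finT finite_subset by blast
  have notin: "g \<notin> cg (G - {g})" if g: "g \<in> G" for g
  proof
    assume "g \<in> cg (G - {g})"
    then have "cg (insert g (G - {g})) = cg (G - {g})" by (rule cg_absorb)
    then have "cg (G - {g}) = C" using g CG by (simp add: insert_absorb)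
    then have "G - {g} \<in> \<G>" using GT \<G>_def by auto
    then have "card G \<le> card (G - {g})" by (rule Gmin)
    moreover have "card (G - {g}) < card G" using finG g by (rule card_Diff1_less)
    ultimately show False by simp
  qed
  have nz: "g \<noteq> 0" if "g \<in> G" for g using notin[OF that] cg.cg0 by metis
  have pointed: "a = 0" if "a \<in> C" "b \<in> C" "a + b = 0" for a b
  proof -
    have "-a = b" using that(3) by (simp add: add_eq_0_iff)
    then show ?thesis using sc that unfolding strongly_convex_def by auto
  qed
  have key: "qpair f g \<le> 0" if gG: "g \<in> G" for g
  proof -
    have noth: "- h \<notin> cg (insert (- g) G)" if hG: "h \<in> G - {g}" for h
    proof
      assume "- h \<in> cg (insert (- g) G)"
      then obtain y t where yt: "y \<in> cg G" "t \<ge> 0" "- h = y + qscale t (- g)"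
        using cg_insert by blast
      have yG1: "y \<in> cg (insert g (G - {g}))" using yt(1) by (simp only: insert_Diff[OF gG])
      obtain y1 b where y1: "y1 \<in> cg (G - {g})" "b \<ge> 0" "y = y1 + qscale b g"
        using cg_insert[OF yG1] by blast
      have yG2: "y1 \<in> cg (insert h (G - {g} - {h}))" using y1(1) by (simp only: insert_Diff[OF hG])
      obtain y2 a where y2: "y2 \<in> cg (G - {g} - {h})" "a \<ge> 0" "y1 = y2 + qscale a h"
        using cg_insert[OF yG2] by blast
      have eq: "y2 + qscale (1 + a) h + qscale (b - t) g = 0"
        using yt(3) y1(3) y2(3) by (simp add: vec_eq_iff algebra_simps)
      have "cg (G - {g} - {h}) \<subseteq> cg (G - {g})" by (rule cg_mono) blast
      then have y2G1: "y2 \<in> cg (G - {g})" using y2(1) by blast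
      have "1 + a \<ge> 0" using y2(2) by simp
      then have A1: "y2 + qscale (1 + a) h \<in> cg (G - {g})"
        using cg.cgstep[OF y2G1, of h "1 + a"] hG by blast
      show False
      proof (cases "t > b")
        case True
        have "g = qscale (1 / (t - b)) (y2 + qscale (1 + a) h)"
          using eq True by (simp add: vec_eq_iff field_simps)
        then have "g \<in> cg (G - {g})" using cg_scale[OF A1, of "1 / (t - b)"] True by simp
        then show False using notin[OF gG] by simp
      next
        case False
        have hG': "h \<in> G" using hG by blast
        have "1 + a \<ge> 0" using y2(2) by simp
        then have a1: "qscale (1 + a) h \<in> C" using cg_scale[OF cg_gen[of h G, OF hG']] CG by blast
        have "cg (G - {g} - {h}) \<subseteq> cg G" by (rule cg_mono) blast
        then have y2G: "y2 \<in> cg G" using y2(1) by blast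
        have "b - t \<ge> 0" using False by simp
        then have b1: "y2 + qscale (b - t) g \<in> C"
          using cg.cgstep[OF y2G gG] CG by blast
        have "qscale (1 + a) h + (y2 + qscale (b - t) g) = 0" using eq by (simp add: algebra_simps)
        then have "qscale (1 + a) h = 0" using pointed[OF a1 b1] by simp
        then have "h = 0" using y2(2) by (simp add: qscale_eq_0)
        then show False using nz hG by auto
      qed
    qed
    have finI: "finite (insert (- g) G)" using finG by simp
    have "\<forall>h\<in>G - {g}. \<exists>w. (\<forall>k\<in>insert (- g) G. qpair w k \<ge> 0) \<and> qpair w (- h) < 0"
    proof
      fix h assume "h \<in> G - {g}"
      show "\<exists>w. (\<forall>k\<in>insert (- g) G. qpair w k \<ge> 0) \<and> qpair w (- h) < 0"
        by (rule farkas[OF finI noth[OF \<open>h \<in> G - {g}\<close>]])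
    qed
    then have "\<exists>W. \<forall>h\<in>G - {g}. (\<forall>k\<in>insert (- g) G. qpair (W h) k \<ge> 0) \<and> qpair (W h) (- h) < 0"
      by (rule bchoice)
    then obtain W where W': "\<forall>h\<in>G - {g}. (\<forall>k\<in>insert (- g) G. qpair (W h) k \<ge> 0) \<and> qpair (W h) (- h) < 0"
      by (elim exE)
    have W: "(\<forall>k\<in>insert (- g) G. qpair (W h) k \<ge> 0) \<and> qpair (W h) (- h) < 0" if "h \<in> G - {g}" for h
      using W' that by blast
    define w where "w = (\<Sum>h\<in>G - {g}. W h)"
    have wk: "qpair w k = (\<Sum>h\<in>G - {g}. qpair (W h) k)" for k unfolding w_def by (rule qpair_sum_left)
    have wnn: "qpair w k \<ge> 0" if "k \<in> G" for k unfolding wk using W that by (intro sum_nonneg) auto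
    have Wg: "qpair (W h) g = 0" if "h \<in> G - {g}" for h
    proof -
      have "qpair (W h) g \<ge> 0" "qpair (W h) (- g) \<ge> 0" using W[OF that] gG by blast+
      then show ?thesis by simp
    qed
    have wg: "qpair w g = 0" unfolding wk using Wg by (intro sum.neutral) blast
    have wpos: "qpair w k > 0" if "k \<in> G" "k \<noteq> g" for k
    proof -
      have "qpair (W k) k \<le> qpair w k" unfolding wk
        using that W finG by (intro member_le_sum) auto
      moreover have "qpair (W k) k > 0" using W[of k] that by auto
      ultimately show ?thesis by simp
    qed
    have zero_set: "{v\<in>G. qpair w v = 0} = {g}"
    proof (intro set_eqI iffI)
      fix v assume v: "v \<in> {v\<in>G. qpair w v = 0}"
      show "v \<in> {g}"
      proof (rule ccontr)
        assume "v \<notin> {g}"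
        then have "qpair w v > 0" using wpos v by blast
        then show False using v by simp
      qed
    next
      fix v assume "v \<in> {g}"
      then show "v \<in> {v\<in>G. qpair w v = 0}" using wg gG by simp
    qed
    have wnn': "\<forall>v\<in>G. qpair w v \<ge> 0" using wnn by blast
    have face: "{x\<in>C. qpair w x = 0} = cg {g}" using cg_face[OF wnn'] zero_set CG by simp
    have "qpair w x \<ge> 0" if "x \<in> C" for x using cg_dual[OF wnn'] that CG by blast
    then have wdual: "w \<in> dual_cone C" unfolding dual_cone_def by blast
    obtain t0 where t0: "t0 \<in> T" "g = qvec t0" using gG GT by auto
    have "t0 \<noteq> 0" using nz[OF gG] t0 by auto
    then obtain \<rho> d where \<rho>: "primitive \<rho>" "d > 0" "t0 = iscale d \<rho>" using prim_exists by blast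
    have gq: "g = qscale (of_int d) (qvec \<rho>)" using t0 \<rho> by simp
    have dq: "(of_int d :: rat) > 0" using \<rho>(2) by simp
    have "cg {g} = cg {qvec \<rho>}"
    proof -
      have "{qscale c g | c. c \<ge> 0} = {qscale c (qvec \<rho>) | c. c \<ge> 0}"
      proof (intro set_eqI iffI)
        fix x assume "x \<in> {qscale c g | c. c \<ge> 0}"
        then obtain c where c: "c \<ge> 0" "x = qscale c g" by blast
        then have "x = qscale (c * of_int d) (qvec \<rho>)" using gq by simp
        moreover have "c * of_int d \<ge> 0" using c(1) dq by simp
        ultimately show "x \<in> {qscale c (qvec \<rho>) | c. c \<ge> 0}" by blast
      next
        fix x assume "x \<in> {qscale c (qvec \<rho>) | c. c \<ge> 0}"
        then obtain c where c: "c \<ge> 0" "x = qscale c (qvec \<rho>)" by blast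
        have "qscale (c / of_int d) g = qscale (c / of_int d * of_int d) (qvec \<rho>)" using gq by simp
        also have "c / of_int d * of_int d = c" using dq by simp
        finally have "x = qscale (c / of_int d) g" using c(2) by simp
        moreover have "c / of_int d \<ge> 0" using c(1) dq by simp
        ultimately show "x \<in> {qscale c g | c. c \<ge> 0}" by blast
      qed
      then show ?thesis by (simp add: cg_single)
    qed
    then have "cone_gen {qvec \<rho>} = {x\<in>C. qpair w x = 0}" using face cg_eq_cone_gen_single by simp
    then have "is_face (cone_gen {qvec \<rho>}) C" unfolding is_face_def
      using wdual by blast
    then have "\<rho> \<in> rays C" unfolding rays_def using \<rho> by auto
    then have "qpair f (qvec \<rho>) \<le> 0" using f by auto
    then show ?thesis using gq \<rho>(2) by (simp add: mult_nonneg_nonpos)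
  qed
  show ?thesis
  proof
    fix x assume "x \<in> C"
    then have "qpair (- f) x \<ge> 0" using cg_dual[of G "- f" x] key CG by auto
    then show "qpair f x \<le> 0" by simp
  qed
qed

lemma qspan_zero: "0 \<in> qspan A"
  unfolding qspan_def by (auto intro!: exI[of _ "{}"])

lemma qspan_step:
  assumes "x \<in> qspan A" "a \<in> A"
  shows "x + qscale c a \<in> qspan A"
proof -
  obtain F k where F: "finite F" "F \<subseteq> A" "x = (\<Sum>v\<in>F. qscale (k v) v)"
    using assms(1) unfolding qspan_def by auto
  define F' where "F' = insert a F"
  define k' where "k' = (if a \<in> F then k else k(a := 0))"
  have F': "finite F'" "F' \<subseteq> A" "a \<in> F'" using F assms(2) F'_def by auto
  have "x = (\<Sum>v\<in>F'. qscale (k' v) v)"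
  proof (cases "a \<in> F")
    case True then show ?thesis using F F'_def k'_def by (simp add: insert_absorb)
  next
    case False
    have "(\<Sum>v\<in>F'. qscale (k' v) v) = (\<Sum>v\<in>F. qscale (k' v) v)"
      using False F F'_def k'_def by simp
    also have "\<dots> = x" using False F k'_def by (auto intro!: sum.cong)
    finally show ?thesis by simp
  qed
  then have "x + qscale c a = (\<Sum>v\<in>F'. qscale ((k'(a := k' a + c)) v) v)"
    using sum_upd[OF F'(1) F'(3), of k' c] by simp
  then show ?thesis using F' unfolding qspan_def by blast
qed

lemma cg_qspan:
  assumes "\<forall>v\<in>G. v \<in> A \<or> - v \<in> A"
  shows "cg G \<subseteq> qspan A"
proof
  fix x assume "x \<in> cg G" then show "x \<in> qspan A"
  proof (induction x rule: cg.induct)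
    case cg0 then show ?case by (rule qspan_zero)
  next
    case (cgstep x v c)
    show ?case
    proof (cases "v \<in> A")
      case True then show ?thesis using qspan_step[OF cgstep(4) True] by simp
    next
      case False
      then have "- v \<in> A" using assms cgstep by auto
      moreover have "qscale c v = qscale (- c) (- v)" by (simp add: vec_eq_iff)
      ultimately show ?thesis using qspan_step[OF cgstep(4), of "- v" "- c"] by simp
    qed
  qed
qed

lemma qspan_perp:
  assumes "\<forall>x\<in>A. qpair w x = 0" "y \<in> qspan A"
  shows "qpair w y = 0"
proof -
  obtain F k where F: "finite F" "F \<subseteq> A" "y = (\<Sum>v\<in>F. qscale (k v) v)"
    using assms(2) unfolding qspan_def by auto
  then show ?thesis using assms(1) by (auto simp: qpair_sum_right intro!: sum.neutral)
qed

lemma indicator_alg: "m \<in> dualM \<sigma> \<Longrightarrow> (\<lambda>x. if x = m then (1::complex) else 0) \<in> alg \<sigma>"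
  by (auto simp: alg_def)

lemma homog_step:
  assumes "homogeneous_vf \<sigma> e p" "m \<in> dualM \<sigma>" "pair m p \<noteq> 0"
  shows "m + e \<in> dualM \<sigma>"
proof -
  let ?f = "\<lambda>x. if x = m then (1::complex) else 0"
  have "der e p ?f \<in> alg \<sigma>" using assms(1) indicator_alg[OF assms(2)]
    unfolding homogeneous_vf_def by auto
  moreover have "der e p ?f (m + e) \<noteq> 0" using assms(3) by (simp add: der_def)
  ultimately show ?thesis unfolding alg_def by auto
qed

lemma vanish_iff:
  assumes "homogeneous_vf \<sigma> e p"
  shows "vanishes_on_orbit_closure \<sigma> \<tau> e p \<longleftrightarrow> (\<forall>m\<in>dualM \<sigma>. pair m p \<noteq> 0 \<longrightarrow> m + e \<notin> perpM \<tau>)"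
proof
  assume V: "vanishes_on_orbit_closure \<sigma> \<tau> e p"
  show "\<forall>m\<in>dualM \<sigma>. pair m p \<noteq> 0 \<longrightarrow> m + e \<notin> perpM \<tau>"
  proof (intro ballI impI)
    fix m assume m: "m \<in> dualM \<sigma>" "pair m p \<noteq> 0"
    let ?f = "\<lambda>x. if x = m then (1::complex) else 0"
    have "der e p ?f \<in> orbit_ideal \<sigma> \<tau>" using V indicator_alg[OF m(1)]
      unfolding vanishes_on_orbit_closure_def by auto
    moreover have "der e p ?f (m + e) \<noteq> 0" using m(2) by (simp add: der_def)
    ultimately show "m + e \<notin> perpM \<tau>" unfolding orbit_ideal_def by auto
  qed
next
  assume H: "\<forall>m\<in>dualM \<sigma>. pair m p \<noteq> 0 \<longrightarrow> m + e \<notin> perpM \<tau>"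
  show "vanishes_on_orbit_closure \<sigma> \<tau> e p" unfolding vanishes_on_orbit_closure_def
  proof
    fix g assume "g \<in> der e p ` alg \<sigma>"
    then obtain f where f: "f \<in> alg \<sigma>" "g = der e p f" by auto
    have ga: "g \<in> alg \<sigma>" using assms f unfolding homogeneous_vf_def by auto
    show "g \<in> orbit_ideal \<sigma> \<tau>" unfolding orbit_ideal_def
    proof (intro CollectI conjI allI impI)
      show "finite {m. g m \<noteq> 0}" using ga alg_def by auto
      fix m assume gm: "g m \<noteq> 0"
      have md: "m \<in> dualM \<sigma>" using ga gm alg_def by auto
      have fm: "f (m - e) \<noteq> 0" "pair (m - e) p \<noteq> 0" using gm f(2) by (auto simp: der_def)
      then have "m - e \<in> dualM \<sigma>" using f(1) alg_def by auto
      then have "(m - e) + e \<notin> perpM \<tau>" using H fm(2) by auto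
      then show "m \<in> dualM \<sigma> - perpM \<tau>" using md by simp
    qed
  qed
qed

declare qvec_add[simp del] qvec_diff[simp del] qvec_neg[simp del] qvec_iscale[simp del]

theorem lemma3p3:
  fixes \<sigma> \<tau> :: "(rat ^ 'n) set" and e p :: "int ^ 'n"
  assumes "rat_poly_cone \<sigma>" and "strongly_convex \<sigma>"
    and "p \<noteq> 0" and "homogeneous_vf \<sigma> e p"
    and "is_face \<tau> \<sigma>"
  shows "(typeI \<sigma> e \<longrightarrow> (vanishes_on_orbit_closure \<sigma> \<tau> e p \<longleftrightarrow>
            qvec p \<in> qspan \<tau> \<or> (\<exists>\<rho>\<in>rays \<tau>. pair e \<rho> > 0)))
       \<and> (typeII \<sigma> e p \<longrightarrow> (vanishes_on_orbit_closure \<sigma> \<tau> e p \<longleftrightarrow>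
            (\<exists>\<rho>\<in>rays \<tau>. pair e \<rho> > 0)))"
proof -
  obtain S0 where S0: "finite S0" "\<sigma> = cone_gen (qvec ` S0)"
    using assms(1) unfolding rat_poly_cone_def by auto
  have sig: "\<sigma> = cg (qvec ` S0)" using S0 cone_gen_cg[of "qvec ` S0"] by simp
  obtain u where u: "u \<in> dual_cone \<sigma>" "\<tau> = {x\<in>\<sigma>. qpair u x = 0}"
    using assms(5) unfolding is_face_def by auto
  obtain d U where dU: "d > 0" "qvec U = qscale (of_int d) u" using denom_exists by blast
  have tau: "\<tau> = {x\<in>\<sigma>. qpair (qvec U) x = 0}" using u(2) dU(2) dU(1) by auto
  have "\<forall>x\<in>\<sigma>. qpair (qvec U) x \<ge> 0" using u(1) dU unfolding dual_cone_def
    by (auto intro!: mult_nonneg_nonneg)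
  then have Udual: "U \<in> dualM \<sigma>" unfolding dualM_def dual_cone_def by simp
  have gen: "qvec s \<in> \<sigma>" if "s \<in> S0" for s using sig cg_gen[of "qvec s" "qvec ` S0"] that by simp
  define St where "St = {s\<in>S0. pair U s = 0}"
  have Unn: "pair U s \<ge> 0" if "s \<in> S0" for s
  proof -
    have "qpair (qvec U) (qvec s) \<ge> 0" using Udual gen[OF that] unfolding dualM_def dual_cone_def by blast
    then show ?thesis by simp
  qed
  have Upos: "pair U s \<ge> 1" if "s \<in> S0" "s \<notin> St" for s using Unn[OF that(1)] that St_def by auto
  have img: "{v\<in>qvec ` S0. qpair (qvec U) v = 0} = qvec ` St" unfolding St_def by auto
  have tau_cg: "\<tau> = cg (qvec ` St)"
  proof -
    have "\<forall>v\<in>qvec ` S0. qpair (qvec U) v \<ge> 0" using Unn by auto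
    from cg_face[OF this] show ?thesis using tau sig img by simp
  qed
  have finSt: "finite St" using S0(1) St_def by auto
  have tau_sub: "\<tau> \<subseteq> \<sigma>" using tau by auto
  have sc_tau: "strongly_convex \<tau>" using assms(2) tau_sub unfolding strongly_convex_def by blast
  have St_in: "qvec s \<in> \<tau>" if "s \<in> St" for s using tau_cg cg_gen[of "qvec s" "qvec ` St"] that by simp
  have StU: "pair U s = 0" if "s \<in> St" for s using that St_def by simp
  have dualM_iff: "m \<in> dualM \<sigma> \<longleftrightarrow> (\<forall>s\<in>S0. pair m s \<ge> 0)" for m
  proof
    assume m: "m \<in> dualM \<sigma>"
    show "\<forall>s\<in>S0. pair m s \<ge> 0"
    proof
      fix s assume "s \<in> S0"
      then have "qpair (qvec m) (qvec s) \<ge> 0" using m gen unfolding dualM_def dual_cone_def by blast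
      then show "pair m s \<ge> 0" by simp
    qed
  next
    assume "\<forall>s\<in>S0. pair m s \<ge> 0"
    then have h: "\<forall>v\<in>qvec ` S0. qpair (qvec m) v \<ge> 0" by auto
    have "qpair (qvec m) x \<ge> 0" if "x \<in> \<sigma>" for x
      using cg_dual[OF h] that sig by simp
    then show "m \<in> dualM \<sigma>" unfolding dualM_def dual_cone_def by blast
  qed
  have perp_iff: "m \<in> perpM \<tau> \<longleftrightarrow> (\<forall>s\<in>St. pair m s = 0)" for m
  proof
    assume m: "m \<in> perpM \<tau>"
    show "\<forall>s\<in>St. pair m s = 0"
    proof
      fix s assume "s \<in> St"
      then have "qpair (qvec m) (qvec s) = 0" using m St_in unfolding perpM_def by blast
      then show "pair m s = 0" by simp
    qed
  next
    assume "\<forall>s\<in>St. pair m s = 0"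
    then have h: "\<forall>v\<in>qvec ` St. qpair (qvec m) v = 0" by auto
    have "qpair (qvec m) x = 0" if "x \<in> \<tau>" for x
      using cg_perp[OF h] that tau_cg by simp
    then show "m \<in> perpM \<tau>" unfolding perpM_def by blast
  qed
  have Bvan: "m + e \<notin> perpM \<tau>" if "m \<in> dualM \<sigma>" "\<rho> \<in> rays \<tau>" "pair e \<rho> > 0" for m \<rho>
  proof
    assume me: "m + e \<in> perpM \<tau>"
    have rt: "qvec \<rho> \<in> \<tau>" using rays_in that(2) .
    then have "qpair (qvec m) (qvec \<rho>) \<ge> 0" using that(1) tau_sub unfolding dualM_def dual_cone_def by blast
    then have "pair m \<rho> \<ge> 0" by simp
    moreover have "qpair (qvec (m + e)) (qvec \<rho>) = 0" using me rt unfolding perpM_def by blast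
    then have "pair m \<rho> + pair e \<rho> = 0" by (simp add: pair_add_left)
    ultimately show False using that(3) by simp
  qed
  have eR: "\<forall>x\<in>\<tau>. qpair (qvec e) x \<le> 0" if "\<not> (\<exists>\<rho>\<in>rays \<tau>. pair e \<rho> > 0)"
  proof -
    have "\<forall>\<rho>\<in>rays \<tau>. qpair (qvec e) (qvec \<rho>) \<le> 0" using that by auto
    then show ?thesis using rays_bound[OF finSt tau_cg sc_tau] by blast
  qed
  note van = vanish_iff[OF assms(4), of \<tau>]
  show ?thesis
  proof (intro conjI impI)
    assume tI: "typeI \<sigma> e"
    have edual: "qvec e \<in> dual_cone \<sigma>" using tI unfolding typeI_def dualM_def by auto
    show "vanishes_on_orbit_closure \<sigma> \<tau> e p \<longleftrightarrow>
            qvec p \<in> qspan \<tau> \<or> (\<exists>\<rho>\<in>rays \<tau>. pair e \<rho> > 0)"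
    proof
      assume V: "vanishes_on_orbit_closure \<sigma> \<tau> e p"
      show "qvec p \<in> qspan \<tau> \<or> (\<exists>\<rho>\<in>rays \<tau>. pair e \<rho> > 0)"
      proof (rule ccontr)
        assume N: "\<not> (qvec p \<in> qspan \<tau> \<or> (\<exists>\<rho>\<in>rays \<tau>. pair e \<rho> > 0))"
        then have np: "qvec p \<notin> qspan \<tau>" and nB: "\<not> (\<exists>\<rho>\<in>rays \<tau>. pair e \<rho> > 0)" by auto
        have eperp: "pair e s = 0" if "s \<in> St" for s
        proof -
          have "qpair (qvec e) (qvec s) \<le> 0" using eR[OF nB] St_in[OF that] by blast
          moreover have "qpair (qvec e) (qvec s) \<ge> 0" using edual St_in[OF that] tau_sub
            unfolding dual_cone_def by blast
          ultimately show ?thesis by simp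
        qed
        define G where "G = qvec ` St \<union> uminus ` qvec ` St"
        have finG: "finite G" using finSt G_def by auto
        have "cg G \<subseteq> qspan \<tau>" by (rule cg_qspan) (auto simp: G_def St_in)
        then have "qvec p \<notin> cg G" using np by auto
        then obtain w where w: "\<forall>g\<in>G. qpair w g \<ge> 0" "qpair w (qvec p) < 0"
          using farkas[OF finG] by blast
        have wS: "qpair w (qvec s) = 0" if "s \<in> St" for s
        proof -
          have "qvec s \<in> G" "- qvec s \<in> G" using that G_def by auto
          then have "qpair w (qvec s) \<ge> 0" "qpair w (- qvec s) \<ge> 0" using w(1) by blast+
          then show ?thesis by simp
        qed
        obtain d' W where dW: "d' > 0" "qvec W = qscale (of_int d') w" using denom_exists by blast
        have WS: "pair W s = 0" if "s \<in> St" for s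
        proof -
          have "of_int (pair W s) = qpair (qvec W) (qvec s)" by simp
          also have "\<dots> = 0" using dW wS[OF that] by simp
          finally show ?thesis by simp
        qed
        have Wp: "pair W p \<noteq> 0"
        proof -
          have "of_int (pair W p) = qpair (qvec W) (qvec p)" by simp
          also have "\<dots> = of_int d' * qpair w (qvec p)" using dW by simp
          also have "\<dots> < 0" using dW(1) w(2) by (simp add: mult_pos_neg)
          finally show ?thesis by auto
        qed
        define j0 where "j0 = (\<Sum>s\<in>S0. \<bar>pair W s\<bar>)"
        have j0b: "\<bar>pair W s\<bar> \<le> j0" if "s \<in> S0" for s
          unfolding j0_def using that S0(1) by (intro member_le_sum) auto
        have j0n: "j0 \<ge> 0" unfolding j0_def by (simp add: sum_nonneg)
        define j where "j = (if j0 * pair U p + pair W p = 0 then j0 + 1 else j0)"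
        have jj: "j \<ge> j0" unfolding j_def by simp
        define m where "m = iscale j U + W"
        have pm: "pair m v = j * pair U v + pair W v" for v
          by (simp add: m_def pair_add_left pair_iscale_left)
        have mdual: "m \<in> dualM \<sigma>" unfolding dualM_iff
        proof
          fix s assume s: "s \<in> S0"
          show "pair m s \<ge> 0"
          proof (cases "s \<in> St")
            case True
            have "pair U s = 0" "pair W s = 0" using StU[OF True] WS[OF True] by auto
            then show ?thesis using pm[of s] by simp
          next
            case False
            have "j * pair U s \<ge> j * 1" using Upos[OF s False] jj j0n by (intro mult_left_mono) auto
            then show ?thesis using pm[of s] j0b[OF s] jj abs_ge_minus_self[of "pair W s"] by linarith
          qed
        qed
        have mp: "pair m p \<noteq> 0"
        proof (cases "j0 * pair U p + pair W p = 0")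
          case True
          have jv: "j = j0 + 1" using True j_def by simp
          have "pair m p = (j0 * pair U p + pair W p) + pair U p" using pm[of p] jv
            by (simp add: algebra_simps)
          then have "pair m p = pair U p" using True by simp
          moreover have "pair U p \<noteq> 0" using True Wp by auto
          ultimately show ?thesis by simp
        next
          case False
          then have "j = j0" using j_def by simp
          then show ?thesis using pm[of p] False by simp
        qed
        have mperp: "m + e \<in> perpM \<tau>" unfolding perp_iff
        proof
          fix s assume s: "s \<in> St"
          show "pair (m + e) s = 0" using pm[of s] WS[OF s] eperp[OF s] StU[OF s]
            by (simp add: pair_add_left)
        qed
        show False using V mdual mp mperp unfolding van by blast
      qed
    next
      assume "qvec p \<in> qspan \<tau> \<or> (\<exists>\<rho>\<in>rays \<tau>. pair e \<rho> > 0)"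
      then show "vanishes_on_orbit_closure \<sigma> \<tau> e p"
      proof
        assume sp: "qvec p \<in> qspan \<tau>"
        show ?thesis unfolding van
        proof (intro ballI impI notI)
          fix m assume m: "m \<in> dualM \<sigma>" "pair m p \<noteq> 0" and me: "m + e \<in> perpM \<tau>"
          have "\<forall>x\<in>\<tau>. qpair (qvec m) x = 0"
          proof
            fix x assume x: "x \<in> \<tau>"
            have "qpair (qvec m) x \<ge> 0" using m(1) x tau_sub unfolding dualM_def dual_cone_def by auto
            moreover have "qpair (qvec e) x \<ge> 0" using edual x tau_sub unfolding dual_cone_def by auto
            moreover have "qpair (qvec (m + e)) x = 0" using me x unfolding perpM_def by auto
            ultimately show "qpair (qvec m) x = 0" by (simp add: qvec_add)
          qed
          then have "qpair (qvec m) (qvec p) = 0" using sp by (rule qspan_perp)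
          then show False using m(2) by simp
        qed
      next
        assume "\<exists>\<rho>\<in>rays \<tau>. pair e \<rho> > 0"
        then show ?thesis unfolding van using Bvan by blast
      qed
    qed
  next
    assume tII: "typeII \<sigma> e p"
    then obtain \<rho>e k where r: "\<rho>e \<in> rays \<sigma>" "p = iscale k \<rho>e" "pair e \<rho>e = -1"
      unfolding typeII_def by blast
    have k: "k \<noteq> 0" using assms(3) r(2) by (auto simp: iscale_def vec_eq_iff)
    have pp: "pair m p = k * pair m \<rho>e" for m using r(2) by (simp add: pair_iscale_right)
    have rs: "qvec \<rho>e \<in> \<sigma>" using rays_in r(1) .
    show "vanishes_on_orbit_closure \<sigma> \<tau> e p \<longleftrightarrow> (\<exists>\<rho>\<in>rays \<tau>. pair e \<rho> > 0)"
    proof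
      assume V: "vanishes_on_orbit_closure \<sigma> \<tau> e p"
      show "\<exists>\<rho>\<in>rays \<tau>. pair e \<rho> > 0"
      proof (rule ccontr)
        assume nB: "\<not> (\<exists>\<rho>\<in>rays \<tau>. pair e \<rho> > 0)"
        have ele: "\<forall>x\<in>\<tau>. qpair (qvec e) x \<le> 0" using eR[OF nB] .
        show False
        proof (cases "pair U \<rho>e = 0")
          case True
          define j where "j = (\<Sum>s\<in>S0. \<bar>pair e s\<bar>)"
          have jb: "\<bar>pair e s\<bar> \<le> j" if "s \<in> S0" for s
            unfolding j_def using that S0(1) by (intro member_le_sum) auto
          have jn: "j \<ge> 0" unfolding j_def by (simp add: sum_nonneg)
          define m where "m = iscale j U - e"
          have pm: "pair m v = j * pair U v - pair e v" for v
            by (simp add: m_def pair_diff_left pair_iscale_left)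
          have mdual: "m \<in> dualM \<sigma>" unfolding dualM_iff
          proof
            fix s assume s: "s \<in> S0"
            show "pair m s \<ge> 0"
            proof (cases "s \<in> St")
              case True
              have "qpair (qvec e) (qvec s) \<le> 0" using ele St_in[OF True] by blast
              then have "pair e s \<le> 0" by simp
              then show ?thesis using pm[of s] StU[OF True] by simp
            next
              case False
              have "j * pair U s \<ge> j * 1" using Upos[OF s False] jn by (intro mult_left_mono) auto
              then show ?thesis using pm[of s] jb[OF s] abs_ge_self[of "pair e s"] by linarith
            qed
          qed
          have mp: "pair m p \<noteq> 0" using pp[of m] pm[of \<rho>e] True r(3) k by simp
          have "m + e = iscale j U" by (simp add: m_def)
          then have mperp: "m + e \<in> perpM \<tau>" unfolding perp_iff
            using StU by (simp add: pair_iscale_left)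
          show False using V mdual mp mperp unfolding van by blast
        next
          case False
          have pU: "pair U p \<noteq> 0" using pp[of U] k False by simp
          have Ue: "U + e \<in> dualM \<sigma>" using homog_step[OF assms(4) Udual pU] .
          have "U + e \<in> perpM \<tau>" unfolding perpM_def mem_Collect_eq
          proof
            fix x assume x: "x \<in> \<tau>"
            have "qpair (qvec (U + e)) x \<ge> 0" using Ue x tau_sub unfolding dualM_def dual_cone_def by auto
            moreover have "qpair (qvec U) x = 0" using x tau by auto
            moreover have "qpair (qvec e) x \<le> 0" using ele x by auto
            ultimately show "qpair (qvec (U + e)) x = 0" by (simp add: qvec_add)
          qed
          then show False using V Udual pU unfolding van by blast
        qed
      qed
    next
      assume "\<exists>\<rho>\<in>rays \<tau>. pair e \<rho> > 0"
      then show "vanishes_on_orbit_closure \<sigma> \<tau> e p" unfolding van using Bvan by blast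
    qed
  qed
qed

end
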